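(* Let $\mathcal{Z}\subset\mathbb{R}^d$ be a convex compact set with $\max_{\mathbf{z},\mathbf{z}'\in\mathcal{Z}}\|\mathbf{z}-\mathbf{z}'\|\le D$, and let $F:\mathcal{Z}\to\mathbb{R}^d$ be single-valued and $L$-Lipschitz continuous. Then: (1) If $\mathbf{w}\in\mathcal{Z}$ is a nearly $(\epsilon,c\epsilon)$-gap solution to $\mathrm{SVI}(F,\mathcal{Z})$ for some $c>0$, then $\mathbf{w}$ is a $\big((1+LcD+Mc)\epsilon\big)$-gap solution to $\mathrm{SVI}(F,\mathcal{Z})$, where $M:=\max_{\mathbf{z}\in\mathcal{Z}}\|F(\mathbf{z})\|$. (2) If $\mathbf{w}$ is an $\epsilon$-gap solution to $\mathrm{SVI}(F,\mathcal{Z})$ and $0<\gamma<L^{-1}$, then $\|\mathbf{w}-\widehat{\mathbf{w}}\|\le\sqrt{\frac{\epsilon}{\gamma^{-1}-L}}$, where $\widehat{\mathbf{w}}$ is the unique solution of $\mathrm{SVI}(F^\gamma_{\mathbf{w}},\mathcal{Z})$ with $F^\gamma_{\mathbf{w}}(\mathbf{z}):=F(\mathbf{z})+\gamma^{-1}(\mathbf{z}-\mathbf{w})$.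
   Context: For single-valued $F$, $\mathrm{SVI}(F,\mathcal{Z})$ asks for $\mathbf{z}^*\in\mathcal{Z}$ with $\langle F(\mathbf{z}^* ),\mathbf{z}-\mathbf{z}^*\rangle\ge0$ for all $\mathbf{z}\in\mathcal{Z}$. A point $\bar{\mathbf{z}}\in\mathcal{Z}$ is an $\epsilon$-gap solution if $\max_{\mathbf{z}\in\mathcal{Z}}\langle F(\bar{\mathbf{z}}),\bar{\mathbf{z}}-\mathbf{z}\rangle\le\epsilon$. A point $\mathbf{w}\in\mathcal{Z}$ is a nearly $(\epsilon,\delta)$-gap solution if there exists $\bar{\mathbf{w}}\in\mathcal{Z}$ with $\|\mathbf{w}-\bar{\mathbf{w}}\|\le\delta$ and $\max_{\mathbf{z}\in\mathcal{Z}}\langle F(\bar{\mathbf{w}}),\bar{\mathbf{w}}-\mathbf{z}\rangle\le\epsilon$. *)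

theory Defs
  imports "HOL-Analysis.Analysis"
begin

definition svi_solution :: "('a::euclidean_space \<Rightarrow> 'a) \<Rightarrow> 'a set \<Rightarrow> 'a \<Rightarrow> bool" where
  "svi_solution F Z z \<longleftrightarrow> z \<in> Z \<and> (\<forall>y\<in>Z. inner (F z) (y - z) \<ge> 0)"

definition gap_solution :: "('a::euclidean_space \<Rightarrow> 'a) \<Rightarrow> 'a set \<Rightarrow> real \<Rightarrow> 'a \<Rightarrow> bool" where
  "gap_solution F Z \<epsilon> z \<longleftrightarrow> z \<in> Z \<and> (\<forall>y\<in>Z. inner (F z) (z - y) \<le> \<epsilon>)"

definition nearly_gap_solution ::
  "('a::euclidean_space \<Rightarrow> 'a) \<Rightarrow> 'a set \<Rightarrow> real \<Rightarrow> real \<Rightarrow> 'a \<Rightarrow> bool" where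
  "nearly_gap_solution F Z \<epsilon> \<delta> w \<longleftrightarrow> w \<in> Z \<and>
     (\<exists>wb\<in>Z. norm (w - wb) \<le> \<delta> \<and> gap_solution F Z \<epsilon> wb)"

end

theory Submission
  imports Defs
begin

lemma lip_cont:
  fixes F :: "'a::euclidean_space \<Rightarrow> 'a"
  assumes "L \<ge> 0" "\<forall>x\<in>Z. \<forall>y\<in>Z. norm (F x - F y) \<le> L * norm (x - y)"
  shows "continuous_on Z F"
  unfolding continuous_on_iff
proof (intro ballI allI impI)
  fix x e assume x: "x \<in> Z" and e: "(0::real) < e"
  show "\<exists>d>0. \<forall>x'\<in>Z. dist x' x < d \<longrightarrow> dist (F x') (F x) < e"
  proof (intro exI[of _ "e / (L + 1)"] conjI ballI impI)
    show "e / (L + 1) > 0" using e assms(1) by simp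
    fix x' assume x': "x' \<in> Z" and d: "dist x' x < e / (L + 1)"
    have "dist (F x') (F x) \<le> L * dist x' x" using assms(2) x x' by (simp add: dist_norm)
    also have "\<dots> \<le> (L + 1) * dist x' x" by (simp add: distrib_right)
    also have "\<dots> < (L + 1) * (e / (L + 1))"
      using d assms(1) by (intro mult_strict_left_mono) auto
    also have "\<dots> = e" using assms(1) by simp
    finally show "dist (F x') (F x) < e" .
  qed
qed

theorem proposition21:
  fixes Z :: "'a::euclidean_space set" and F :: "'a \<Rightarrow> 'a" and D L :: real and w :: 'a
  assumes "convex Z" and "compact Z"
    and "\<forall>z\<in>Z. \<forall>z'\<in>Z. norm (z - z') \<le> D"
    and "L \<ge> 0"
    and "\<forall>x\<in>Z. \<forall>y\<in>Z. norm (F x - F y) \<le> L * norm (x - y)"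
    and "w \<in> Z"
  shows
    "(\<forall>\<epsilon> c. c > 0 \<longrightarrow> nearly_gap_solution F Z \<epsilon> (c * \<epsilon>) w \<longrightarrow>
        gap_solution F Z ((1 + L * c * D + (SUP z\<in>Z. norm (F z)) * c) * \<epsilon>) w)
   \<and> (\<forall>\<epsilon> \<gamma>. gap_solution F Z \<epsilon> w \<longrightarrow> 0 < \<gamma> \<longrightarrow> \<gamma> * L < 1 \<longrightarrow>
        (\<exists>!wh. svi_solution (\<lambda>z. F z + (1 / \<gamma>) *\<^sub>R (z - w)) Z wh)
      \<and> (\<forall>wh. svi_solution (\<lambda>z. F z + (1 / \<gamma>) *\<^sub>R (z - w)) Z wh \<longrightarrow>
           norm (w - wh) \<le> sqrt (\<epsilon> / (1 / \<gamma> - L))))"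
proof (intro conjI allI impI)
  have cl: "closed Z" using assms(2) compact_imp_closed by blast
  have ne: "Z \<noteq> {}" using assms(6) by blast
  have contF: "continuous_on Z F" using lip_cont assms(4,5) by blast
  have Lip: "\<And>x y. x \<in> Z \<Longrightarrow> y \<in> Z \<Longrightarrow> norm (F x - F y) \<le> L * norm (x - y)"
    using assms(5) by blast
  have Dm: "\<And>x y. x \<in> Z \<Longrightarrow> y \<in> Z \<Longrightarrow> norm (x - y) \<le> D" using assms(3) by blast
  {
    fix \<epsilon> c :: real
    assume c: "c > 0" and ng: "nearly_gap_solution F Z \<epsilon> (c * \<epsilon>) w"
    then obtain wb where wb: "wb \<in> Z" "norm (w - wb) \<le> c * \<epsilon>" "gap_solution F Z \<epsilon> wb"
      unfolding nearly_gap_solution_def by blast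
    have ce: "c * \<epsilon> \<ge> 0" using wb(2) norm_ge_zero order_trans by blast
    have bdd: "bdd_above ((\<lambda>z. norm (F z)) ` Z)"
    proof (rule bdd_aboveI2)
      fix z assume z: "z \<in> Z"
      have "norm (F z) \<le> norm (F w) + norm (F z - F w)" by (metis norm_triangle_sub add.commute)
      also have "\<dots> \<le> norm (F w) + L * D"
        using Lip[OF z assms(6)] Dm[OF z assms(6)] assms(4)
        by (smt (verit) mult_left_mono)
      finally show "norm (F z) \<le> norm (F w) + L * D" .
    qed
    define M where "M = (SUP z\<in>Z. norm (F z))"
    have Mb: "norm (F wb) \<le> M" unfolding M_def using bdd wb(1) by (rule cSUP_upper2) simp
    show "gap_solution F Z ((1 + L * c * D + (SUP z\<in>Z. norm (F z)) * c) * \<epsilon>) w"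
      unfolding gap_solution_def M_def[symmetric]
    proof (intro conjI ballI)
      show "w \<in> Z" by fact
      fix y assume y: "y \<in> Z"
      have eq: "inner (F w) (w - y) = inner (F wb) (wb - y) + inner (F w - F wb) (w - y)
                 + inner (F wb) (w - wb)"
        by (simp add: inner_diff_left inner_diff_right)
      have a: "inner (F wb) (wb - y) \<le> \<epsilon>" using wb(3) y unfolding gap_solution_def by blast
      have "inner (F w - F wb) (w - y) \<le> norm (F w - F wb) * norm (w - y)"
        using Cauchy_Schwarz_ineq2 abs_le_iff by blast
      also have "\<dots> \<le> (L * norm (w - wb)) * D"
        using Lip[OF assms(6) wb(1)] Dm[OF assms(6) y] assms(4)
        by (intro mult_mono) auto
      also have "\<dots> \<le> (L * (c * \<epsilon>)) * D"
        using wb(2) assms(4) Dm[OF assms(6) y]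
        by (intro mult_right_mono mult_left_mono) (auto intro: order_trans[OF norm_ge_zero])
      finally have b: "inner (F w - F wb) (w - y) \<le> L * c * D * \<epsilon>" by (simp add: mult_ac)
      have "inner (F wb) (w - wb) \<le> norm (F wb) * norm (w - wb)"
        using Cauchy_Schwarz_ineq2 abs_le_iff by blast
      also have "\<dots> \<le> M * (c * \<epsilon>)"
        using Mb wb(2) by (intro mult_mono) (auto intro: order_trans[OF norm_ge_zero])
      finally have d: "inner (F wb) (w - wb) \<le> M * c * \<epsilon>" by (simp add: mult_ac)
      show "inner (F w) (w - y) \<le> (1 + L * c * D + M * c) * \<epsilon>"
        using eq a b d by (simp add: algebra_simps)
    qed
  }
  fix \<epsilon> \<gamma> :: real
  assume gap: "gap_solution F Z \<epsilon> w" and g: "0 < \<gamma>" and gL: "\<gamma> * L < 1"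
  define G where "G = (\<lambda>z. F z + (1 / \<gamma>) *\<^sub>R (z - w))"
  have Lg: "1 / \<gamma> - L > 0" using g gL by (simp add: field_simps)
  have mono: "inner (G x - G y) (x - y) \<ge> (1 / \<gamma> - L) * (norm (x - y))^2"
    if x: "x \<in> Z" and y: "y \<in> Z" for x y
  proof -
    have "inner (G x - G y) (x - y) = inner (F x - F y) (x - y) + (1/\<gamma>) * (norm (x - y))^2"
      unfolding G_def by (simp add: algebra_simps inner_diff_left inner_add_left power2_norm_eq_inner)
    moreover have "inner (F x - F y) (x - y) \<ge> - (L * (norm (x - y))^2)"
    proof -
      have "\<bar>inner (F x - F y) (x - y)\<bar> \<le> norm (F x - F y) * norm (x - y)"
        by (rule Cauchy_Schwarz_ineq2)
      also have "\<dots> \<le> L * norm (x - y) * norm (x - y)"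
        using Lip[OF x y] by (intro mult_right_mono) auto
      finally show ?thesis by (simp add: power2_eq_square mult_ac)
    qed
    ultimately show ?thesis by (simp add: algebra_simps)
  qed
  show "\<exists>!wh. svi_solution (\<lambda>z. F z + (1 / \<gamma>) *\<^sub>R (z - w)) Z wh"
    unfolding G_def[symmetric]
  proof (rule ex_ex1I)
    define T where "T = (\<lambda>z. closest_point Z (z - G z))"
    have contG: "continuous_on Z G" unfolding G_def
      by (intro continuous_intros contF)
    have contT: "continuous_on Z T" unfolding T_def
      by (rule continuous_on_compose2[OF continuous_on_closest_point[OF assms(1) cl ne, of UNIV]])
         (auto intro: continuous_intros contG)
    have TZ: "T \<in> Z \<rightarrow> Z" unfolding T_def using closest_point_in_set[OF cl ne] by blast
    obtain z where z: "z \<in> Z" "T z = z" using brouwer[OF assms(2,1) ne contT TZ] by blast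
    have cp: "\<forall>u\<in>Z. dist (z - G z) z \<le> dist (z - G z) u"
      using closest_point_exists(2)[OF cl ne, of "z - G z"] z(2) unfolding T_def by simp
    have "inner ((z - G z) - z) (y - z) \<le> 0" if y: "y \<in> Z" for y
      by (rule any_closest_point_dot[OF assms(1) cl z(1) y cp])
    then have "\<forall>y\<in>Z. inner (G z) (y - z) \<ge> 0" by simp
    then show "\<exists>wh. svi_solution G Z wh" using z(1) unfolding svi_solution_def by blast
  next
    fix x y assume "svi_solution G Z x" "svi_solution G Z y"
    then have x: "x \<in> Z" "inner (G x) (y - x) \<ge> 0" and y: "y \<in> Z" "inner (G y) (x - y) \<ge> 0"
      unfolding svi_solution_def by auto
    have "inner (G x - G y) (x - y) \<le> 0"
      using x(2) y(2) by (simp add: inner_diff_left inner_diff_right algebra_simps)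
    with mono[OF x(1) y(1)] have "(1 / \<gamma> - L) * (norm (x - y))^2 \<le> 0" by linarith
    with Lg have "(norm (x - y))^2 \<le> 0" by (simp add: mult_le_0_iff)
    then show "x = y" by simp
  qed
  fix wh assume "svi_solution (\<lambda>z. F z + (1 / \<gamma>) *\<^sub>R (z - w)) Z wh"
  then have wh: "wh \<in> Z" "\<forall>y\<in>Z. inner (G wh) (y - wh) \<ge> 0"
    unfolding svi_solution_def G_def by auto
  have h1: "inner (G wh) (w - wh) \<ge> 0" using wh assms(6) by blast
  have G0: "G w = F w" unfolding G_def by simp
  have h2: "inner (G w) (w - wh) \<le> \<epsilon>" using gap wh(1) unfolding gap_solution_def G0 by blast
  have "(1 / \<gamma> - L) * (norm (w - wh))^2 \<le> inner (G w - G wh) (w - wh)"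
    by (rule mono[OF assms(6) wh(1)])
  also have "\<dots> \<le> \<epsilon>" using h1 h2 by (simp add: inner_diff_left)
  finally have "(norm (w - wh))^2 \<le> \<epsilon> / (1 / \<gamma> - L)"
    using Lg by (simp add: pos_le_divide_eq mult.commute)
  then show "norm (w - wh) \<le> sqrt (\<epsilon> / (1 / \<gamma> - L))"
    by (simp add: real_le_rsqrt)
qed

end
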